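(* Let $n\ge2$, let $\mathcal{S}=\{\boldsymbol{\sigma}(\mathbf{t}):\mathbf{t}\in D\}$ be a rationally parameterisable hypersurface in $\mathbb{R}^n$, and let $O$ be an open subset of $D\setminus\sigma_1^{-1}(0)$ in $\mathbb{R}^{n-1}$ that satisfies the hyperplane condition and the inner point condition. If $F$ is an E-function (of some degree $d$) with $F(\mathbf{x})=0$ for all $\mathbf{x}\in\boldsymbol{\sigma}(O)$, then $F$ is the zero function.
   Context: An rp-hypersurface is $\mathcal{S}=\{\boldsymbol{\sigma}(\mathbf{t}):\mathbf{t}\in D\}$ with $\boldsymbol{\sigma}=(\sigma_1,\dots,\sigma_n)^T$ having rational functions of $\mathbf{t}\in\mathbb{R}^{n-1}$ as components and $D\subseteq\mathbb{R}^{n-1}$ a set where they are defined. $\hat{\boldsymbol{\sigma}}(\mathbf{t})=(\sigma_2(\mathbf{t})/\sigma_1(\mathbf{t}),\dots,\sigma_n(\mathbf{t})/\sigma_1(\mathbf{t}))^T$ for $\mathbf{t}\in D\setminus\sigma_1^{-1}(0)$. Hyperplane condition: $\boldsymbol{\sigma}(O)$ is not contained in any (affine) hyperplane of $\mathbb{R}^n$. Inner point condition: there is $\mathbf{t}\in O$ such that $\hat{\boldsymbol{\sigma}}(\mathbf{t})$ is an interior point of $\hat{\boldsymbol{\sigma}}(O)$ in $\mathbb{R}^{n-1}$. An E-function of degree $d$ ($d\in\mathbb{Z}$) is a function of the form $F(\mathbf{x})=\sum_{k=1}^m P_k(\mathbf{x})e^{-i\,\mathbf{v}_k\cdot\mathbf{x}}$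 (on $\mathbb{C}^n$, where defined), with distinct points $\mathbf{v}_1,\dots,\mathbf{v}_m\in\mathbb{R}^n$ and coefficients $P_k$ that are complex rational functions of $\mathbf{x}$ homogeneous of degree $d$ (i.e. $P_k(\lambda\mathbf{x})=\lambda^dP_k(\mathbf{x})$ for all real $\lambda\neq0$). *)

theory Defs
  imports "HOL-Analysis.Analysis"
begin

text \<open>The parameter space R^(n-1) is real^'m (so n-1 = CARD('m) \<ge> 1,
i.e. n \<ge> 2), and R^n is real^('m option): coordinate None is the first coordinate
(sigma_1), coordinate Some i are the remaining ones. C^n is complex^('m option).\<close>

definition polyfun :: "('a::comm_ring_1 ^ 'i::finite \<Rightarrow> 'a) \<Rightarrow> bool" where
  "polyfun f \<longleftrightarrow> (\<exists>(E :: ('i \<Rightarrow> nat) set) c. finite E \<and>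
      (\<forall>x. f x = (\<Sum>\<alpha>\<in>E. c \<alpha> * (\<Prod>i\<in>UNIV. (x $ i) ^ (\<alpha> i)))))"

definition rp_param :: "(real^'m::finite \<Rightarrow> real^('m option)) \<Rightarrow> (real^'m) set \<Rightarrow> bool" where
  "rp_param \<sigma> D \<longleftrightarrow> (\<forall>j. \<exists>p q. polyfun p \<and> polyfun q \<and>
      (\<forall>t\<in>D. q t \<noteq> 0 \<and> \<sigma> t $ j = p t / q t))"

definition sigma_hat :: "(real^'m::finite \<Rightarrow> real^('m option)) \<Rightarrow> real^'m \<Rightarrow> real^'m" where
  "sigma_hat \<sigma> t = (\<chi> i. \<sigma> t $ Some i / \<sigma> t $ None)"

definition hyperplane_condition :: "(real^'m::finite \<Rightarrow> real^('m option)) \<Rightarrow> (real^'m) set \<Rightarrow> bool" where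
  "hyperplane_condition \<sigma> U \<longleftrightarrow>
     \<not> (\<exists>a b. a \<noteq> 0 \<and> \<sigma> ` U \<subseteq> {y. inner a y = b})"

definition inner_point_condition :: "(real^'m::finite \<Rightarrow> real^('m option)) \<Rightarrow> (real^'m) set \<Rightarrow> bool" where
  "inner_point_condition \<sigma> U \<longleftrightarrow> (\<exists>t\<in>U. sigma_hat \<sigma> t \<in> interior (sigma_hat \<sigma> ` U))"

text \<open>Bilinear (not Hermitian) pairing v . x of a real vector with a complex vector.\<close>
definition rdot :: "real^'n::finite \<Rightarrow> complex^'n \<Rightarrow> complex" where
  "rdot v x = (\<Sum>j\<in>UNIV. complex_of_real (v $ j) * x $ j)"

definition cembed :: "real^'n::finite \<Rightarrow> complex^'n" where
  "cembed y = (\<chi> j. complex_of_real (y $ j))"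

definition E_fun :: "nat \<Rightarrow> (nat \<Rightarrow> real^'n::finite) \<Rightarrow> (nat \<Rightarrow> complex^'n \<Rightarrow> complex)
    \<Rightarrow> (nat \<Rightarrow> complex^'n \<Rightarrow> complex) \<Rightarrow> complex^'n \<Rightarrow> complex" where
  "E_fun m v Pn Pd x = (\<Sum>k<m. (Pn k x / Pd k x) * exp (- \<i> * rdot (v k) x))"

definition E_defined :: "nat \<Rightarrow> (nat \<Rightarrow> complex^'n::finite \<Rightarrow> complex) \<Rightarrow> complex^'n \<Rightarrow> bool" where
  "E_defined m Pd x \<longleftrightarrow> (\<forall>k<m. Pd k x \<noteq> 0)"

definition is_E_function :: "int \<Rightarrow> nat \<Rightarrow> (nat \<Rightarrow> real^'n::finite) \<Rightarrow> (nat \<Rightarrow> complex^'n \<Rightarrow> complex)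
    \<Rightarrow> (nat \<Rightarrow> complex^'n \<Rightarrow> complex) \<Rightarrow> bool" where
  "is_E_function d m v Pn Pd \<longleftrightarrow> inj_on v {..<m} \<and>
     (\<forall>k<m. polyfun (Pn k) \<and> polyfun (Pd k) \<and> (\<exists>x. Pd k x \<noteq> 0) \<and>
        (\<forall>x (c::real). c \<noteq> 0 \<and> Pd k x \<noteq> 0 \<and> Pd k (c *\<^sub>R x) \<noteq> 0 \<longrightarrow>
            Pn k (c *\<^sub>R x) / Pd k (c *\<^sub>R x) = complex_of_real c powi d * (Pn k x / Pd k x)))"

end

theory Submission
  imports Defs "HOL-Computational_Algebra.Fundamental_Theorem_Algebra" "HOL-Computational_Algebra.Polynomial_Factorial" "HOL-Computational_Algebra.Field_as_Ring"
begin


lemma order_decomp_exact: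
  fixes B :: "complex poly"
  assumes "poly B z \<noteq> 0"
  shows "order z ([:-z,1:]^n * B) = n"
proof -
  have "B \<noteq> 0" using assms by auto
  hence "order z ([:-z,1:]^n * B) = order z ([:-z,1:]^n) + order z B"
    by (intro order_mult) simp
  also have "\<dots> = n" using assms by (simp add: order_power_n_n order_0I)
  finally show ?thesis .
qed

lemma W0:
  fixes P Qt :: "complex poly"
  assumes "poly P z \<noteq> 0" "poly Qt z \<noteq> 0"
  shows "order z (pderiv P * ([:-z,1:]^Suc n * Qt) - P * pderiv ([:-z,1:]^Suc n * Qt)) = n"
proof -
  define e where "e = ([:-z,1:] :: complex poly)"
  have de: "pderiv e = 1" unfolding e_def by (simp add: pderiv_pCons)
  define B where "B = e * (pderiv P * Qt - P * pderiv Qt) - smult (of_nat (Suc n)) (P * Qt)"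
  have "pderiv (e^Suc n * Qt) = e^Suc n * pderiv Qt + Qt * smult (of_nat (Suc n)) (e^n)"
    by (simp only: pderiv_mult pderiv_power_Suc de) (simp add: algebra_simps)
  hence EQ: "pderiv P * (e^Suc n * Qt) - P * pderiv (e^Suc n * Qt) = e^n * B"
    unfolding B_def by (simp add: algebra_simps)
  have nz: "(of_nat (Suc n) :: complex) \<noteq> 0" by (simp only: of_nat_eq_0_iff)
  have "poly B z = - (of_nat (Suc n) * (poly P z * poly Qt z))" unfolding B_def e_def by simp
  hence "poly B z \<noteq> 0" using assms nz by simp
  from order_decomp_exact[OF this, of n] EQ show ?thesis unfolding e_def by (simp only:)
qed

lemma coprime_root:
  fixes p q :: "complex poly"
  assumes "coprime p q" "poly p z = 0" "poly q z = 0"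
  shows False
proof -
  have "[:-z,1:] dvd p" "[:-z,1:] dvd q" using assms poly_eq_0_iff_dvd by auto
  hence "is_unit [:-z,1:]" using assms(1) coprime_common_divisor by blast
  thus False by (simp add: is_unit_iff_degree)
qed

lemma decomp_root:
  fixes p :: "complex poly"
  assumes "p \<noteq> 0"
  obtains P where "p = [:-z,1:]^order z p * P" "poly P z \<noteq> 0"
  using order_decomp[OF assms, of z] poly_eq_0_iff_dvd by blast

lemma order_W:
  fixes p q :: "complex poly"
  assumes "p \<noteq> 0" "q \<noteq> 0" "order z p = 0" "order z q = Suc n"
  shows "order z (pderiv p * q - p * pderiv q) = n"
proof -
  obtain Q where Q: "q = [:-z,1:]^order z q * Q" "poly Q z \<noteq> 0" using decomp_root[OF assms(2)] by blast
  have "poly p z \<noteq> 0" using assms order_root by blast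
  thus ?thesis using W0[of p z Q n] Q assms(4) by simp
qed

lemma order_W':
  fixes p q :: "complex poly"
  assumes "p \<noteq> 0" "q \<noteq> 0" "order z q = 0" "order z p = Suc n"
  shows "order z (pderiv p * q - p * pderiv q) = n"
proof -
  have e: "pderiv p * q - p * pderiv q = - (pderiv q * p - q * pderiv p)" by (simp add: algebra_simps)
  have "order z (pderiv p * q - p * pderiv q) = order z (pderiv q * p - q * pderiv p)"
    by (subst e) (rule order_uminus)
  thus ?thesis using order_W[OF assms(2,1,3,4)] by simp
qed

lemma ALG_coprime:
  fixes p q c d :: "complex poly"
  assumes cop1: "coprime p q" and cop2: "coprime c d" and q0: "q \<noteq> 0" and d0: "d \<noteq> 0" and p0: "p \<noteq> 0"
    and eq: "(pderiv p * q - p * pderiv q) * (d * d) = smult k (p * q * (pderiv c * d - c * pderiv d))"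
  shows "smult k (pderiv c * d - c * pderiv d) = 0"
proof (rule ccontr)
  define w where "w = pderiv c * d - c * pderiv d"
  define A where "A = pderiv p * q - p * pderiv q"
  assume H: "smult k (pderiv c * d - c * pderiv d) \<noteq> 0"
  hence k0: "k \<noteq> 0" and w0: "w \<noteq> 0" unfolding w_def by auto
  have c0: "c \<noteq> 0" using w0 unfolding w_def by auto
  have R0: "smult k (p * q * w) \<noteq> 0" using k0 w0 p0 q0 by simp
  hence A0: "A \<noteq> 0" using eq unfolding A_def w_def by auto
  have ord_eq: "order z A + 2 * order z d = order z p + order z q + order z w" for z
  proof -
    have "order z (A * (d * d)) = order z A + 2 * order z d"
      using A0 d0 by (simp add: order_mult)
    moreover have "order z (smult k (p * q * w)) = order z p + order z q + order z w"
      using k0 p0 q0 w0 by (simp add: order_smult order_mult)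
    ultimately show ?thesis using eq unfolding A_def w_def by simp
  qed
  have noroot: "order z p = 0 \<and> order z q = 0 \<and> order z d = 0" for z
  proof -
    have pq: "order z p = 0 \<or> order z q = 0"
      using coprime_root[OF cop1, of z] order_root p0 q0 by blast
    have cd: "order z c = 0 \<or> order z d = 0"
      using coprime_root[OF cop2, of z] order_root c0 d0 by blast
    have Aord: "order z A + 1 = order z p + order z q \<or> (order z p = 0 \<and> order z q = 0)"
    proof (cases "order z p = 0 \<and> order z q = 0")
      case False
      then consider "order z p = 0" "order z q \<noteq> 0" | "order z q = 0" "order z p \<noteq> 0" using pq False by auto
      thus ?thesis
      proof cases
        case 1 then obtain n where "order z q = Suc n" using not0_implies_Suc by blast
        thus ?thesis using order_W[OF p0 q0 1(1)] 1 unfolding A_def by simp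
      next
        case 2 then obtain n where "order z p = Suc n" using not0_implies_Suc by blast
        thus ?thesis using order_W'[OF p0 q0 2(1)] 2 unfolding A_def by simp
      qed
    qed simp
    have word: "order z d \<noteq> 0 \<Longrightarrow> order z w + 1 = order z d"
    proof -
      assume "order z d \<noteq> 0"
      then obtain n where n: "order z d = Suc n" using not0_implies_Suc by blast
      have "order z c = 0" using cd n by simp
      thus ?thesis using order_W[OF c0 d0 _ n] n unfolding w_def by simp
    qed
    show ?thesis using ord_eq[of z] Aord word by (cases "order z d = 0") auto
  qed
  have const: "degree r = 0" if "r \<noteq> 0" "\<And>z. order z r = 0" for r :: "complex poly"
  proof (rule ccontr)
    assume "degree r \<noteq> 0"
    hence "\<not> constant (poly r)" by (metis constant_degree)
    then obtain z where "poly r z = 0" using fundamental_theorem_of_algebra by blast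
    thus False using that order_root by blast
  qed
  have "degree p = 0" "degree q = 0" using const noroot p0 q0 by auto
  hence "pderiv p = 0" "pderiv q = 0" using pderiv_eq_0_iff by auto
  hence "A = 0" unfolding A_def by simp
  thus False using A0 by simp
qed

lemma wronsk_factor:
  fixes g x y :: "complex poly"
  shows "pderiv (g*x) * (g*y) - (g*x) * pderiv (g*y) = (g*g) * (pderiv x * y - x * pderiv y)"
  by (simp add: pderiv_mult algebra_simps)

lemma ALG:
  fixes p q c d :: "complex poly"
  assumes q0: "q \<noteq> 0" and d0: "d \<noteq> 0"
    and eq: "(pderiv p * q - p * pderiv q) * (d * d) = smult k (p * q * (pderiv c * d - c * pderiv d))"
  shows "p = 0 \<or> smult k (pderiv c * d - c * pderiv d) = 0"
proof (cases "p = 0")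
  case False
  define g1 where "g1 = gcd p q"
  define g2 where "g2 = gcd c d"
  define p1 where "p1 = p div g1"
  define q1 where "q1 = q div g1"
  define c1 where "c1 = c div g2"
  define d1 where "d1 = d div g2"
  have g10: "g1 \<noteq> 0" using q0 unfolding g1_def by simp
  have g20: "g2 \<noteq> 0" using d0 unfolding g2_def by simp
  have pe: "p = g1 * p1" unfolding p1_def g1_def by simp
  have qe: "q = g1 * q1" unfolding q1_def g1_def by simp
  have ce: "c = g2 * c1" unfolding c1_def g2_def by simp
  have de: "d = g2 * d1" unfolding d1_def g2_def by simp
  have cop1: "coprime p1 q1" unfolding p1_def q1_def g1_def using q0 by (intro div_gcd_coprime) auto
  have cop2: "coprime c1 d1" unfolding c1_def d1_def g2_def using d0 by (intro div_gcd_coprime) auto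
  have p10: "p1 \<noteq> 0" using False pe by auto
  have q10: "q1 \<noteq> 0" using q0 qe by auto
  have d10: "d1 \<noteq> 0" using d0 de by auto
  define A1 where "A1 = pderiv p1 * q1 - p1 * pderiv q1"
  define w1 where "w1 = pderiv c1 * d1 - c1 * pderiv d1"
  have "(g1*g1*(g2*g2)) * (A1 * (d1 * d1)) = (g1*g1*(g2*g2)) * smult k (p1 * q1 * w1)"
  proof -
    have "(g1*g1*(g2*g2)) * (A1 * (d1 * d1)) = (pderiv p * q - p * pderiv q) * (d * d)"
      unfolding pe qe de wronsk_factor A1_def by (simp add: algebra_simps)
    also have "\<dots> = smult k (p * q * (pderiv c * d - c * pderiv d))" by (rule eq)
    also have "\<dots> = (g1*g1*(g2*g2)) * smult k (p1 * q1 * w1)"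
      unfolding pe qe ce de wronsk_factor w1_def by (simp add: algebra_simps)
    finally show ?thesis .
  qed
  moreover have "g1*g1*(g2*g2) \<noteq> 0" using g10 g20 by simp
  ultimately have "A1 * (d1 * d1) = smult k (p1 * q1 * w1)" using mult_left_cancel by blast
  hence "smult k w1 = 0" using ALG_coprime[OF cop1 cop2 q10 d10 p10] unfolding A1_def w1_def by blast
  hence "smult k (pderiv c * d - c * pderiv d) = 0"
    unfolding ce de wronsk_factor w1_def by auto
  thus ?thesis by simp
qed simp




definition rat_on :: "real set \<Rightarrow> (real \<Rightarrow> complex) \<Rightarrow> bool" where
  "rat_on I f \<longleftrightarrow> (\<exists>p q. \<forall>s\<in>I. poly q (of_real s) \<noteq> 0 \<and> f s = poly p (of_real s) / poly q (of_real s))"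

lemma rat_on_subset: "rat_on I f \<Longrightarrow> J \<subseteq> I \<Longrightarrow> rat_on J f"
  unfolding rat_on_def by blast

lemma rat_on_cong: "rat_on I f \<Longrightarrow> (\<And>s. s \<in> I \<Longrightarrow> f s = g s) \<Longrightarrow> rat_on I g"
  unfolding rat_on_def by metis

lemma rat_on_poly: "rat_on I (\<lambda>s. poly p (of_real s))"
  unfolding rat_on_def by (rule exI[of _ p], rule exI[of _ 1]) simp

lemma rat_on_const: "rat_on I (\<lambda>s. c)"
  using rat_on_poly[of I "[:c:]"] by simp

lemma rat_on_add: "rat_on I f \<Longrightarrow> rat_on I g \<Longrightarrow> rat_on I (\<lambda>s. f s + g s)"
  unfolding rat_on_def
proof (elim exE)
  fix p q p' q' assume f: "\<forall>s\<in>I. poly q (of_real s) \<noteq> 0 \<and> f s = poly p (of_real s) / poly q (of_real s)"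
    and g: "\<forall>s\<in>I. poly q' (of_real s) \<noteq> 0 \<and> g s = poly p' (of_real s) / poly q' (of_real s)"
  show "\<exists>P Q. \<forall>s\<in>I. poly Q (of_real s) \<noteq> 0 \<and> f s + g s = poly P (of_real s) / poly Q (of_real s)"
    by (rule exI[of _ "p * q' + p' * q"], rule exI[of _ "q * q'"]) (use f g in \<open>auto simp: add_frac_eq\<close>)
qed

lemma rat_on_mult: "rat_on I f \<Longrightarrow> rat_on I g \<Longrightarrow> rat_on I (\<lambda>s. f s * g s)"
  unfolding rat_on_def
proof (elim exE)
  fix p q p' q' assume f: "\<forall>s\<in>I. poly q (of_real s) \<noteq> 0 \<and> f s = poly p (of_real s) / poly q (of_real s)"
    and g: "\<forall>s\<in>I. poly q' (of_real s) \<noteq> 0 \<and> g s = poly p' (of_real s) / poly q' (of_real s)"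
  show "\<exists>P Q. \<forall>s\<in>I. poly Q (of_real s) \<noteq> 0 \<and> f s * g s = poly P (of_real s) / poly Q (of_real s)"
    by (rule exI[of _ "p * p'"], rule exI[of _ "q * q'"]) (use f g in \<open>auto\<close>)
qed

lemma rat_on_divide: "rat_on I f \<Longrightarrow> rat_on I g \<Longrightarrow> (\<forall>s\<in>I. g s \<noteq> 0) \<Longrightarrow> rat_on I (\<lambda>s. f s / g s)"
  unfolding rat_on_def
proof (elim exE)
  fix p q p' q' assume f: "\<forall>s\<in>I. poly q (of_real s) \<noteq> 0 \<and> f s = poly p (of_real s) / poly q (of_real s)"
    and g: "\<forall>s\<in>I. poly q' (of_real s) \<noteq> 0 \<and> g s = poly p' (of_real s) / poly q' (of_real s)"
    and nz: "\<forall>s\<in>I. g s \<noteq> 0"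
  show "\<exists>P Q. \<forall>s\<in>I. poly Q (of_real s) \<noteq> 0 \<and> f s / g s = poly P (of_real s) / poly Q (of_real s)"
    by (rule exI[of _ "p * q'"], rule exI[of _ "q * p'"]) (use f g nz in \<open>auto\<close>)
qed

lemma rat_on_uminus: "rat_on I f \<Longrightarrow> rat_on I (\<lambda>s. - f s)"
  using rat_on_mult[OF rat_on_const[of I "-1"], of f] by simp

lemma rat_on_diff: "rat_on I f \<Longrightarrow> rat_on I g \<Longrightarrow> rat_on I (\<lambda>s. f s - g s)"
  using rat_on_add[of I f "\<lambda>s. - g s"] rat_on_uminus[of I g] by simp

lemma rat_on_sum: "finite K \<Longrightarrow> (\<And>k. k \<in> K \<Longrightarrow> rat_on I (f k)) \<Longrightarrow> rat_on I (\<lambda>s. \<Sum>k\<in>K. f k s)"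
  by (induction K rule: finite_induct) (auto intro: rat_on_add rat_on_const)

lemma rat_on_prod: "finite K \<Longrightarrow> (\<And>k. k \<in> K \<Longrightarrow> rat_on I (f k)) \<Longrightarrow> rat_on I (\<lambda>s. \<Prod>k\<in>K. f k s)"
  by (induction K rule: finite_induct) (auto intro: rat_on_mult rat_on_const)

lemma rat_on_power: "rat_on I f \<Longrightarrow> rat_on I (\<lambda>s. f s ^ n)"
  by (induction n) (auto intro: rat_on_mult rat_on_const)

lemma rat_on_deriv:
  assumes "open I" "rat_on I f"
  shows "\<exists>f'. rat_on I f' \<and> (\<forall>s\<in>I. (f has_vector_derivative f' s) (at s))"
proof -
  obtain p q where pq: "\<forall>s\<in>I. poly q (of_real s) \<noteq> 0 \<and> f s = poly p (of_real s) / poly q (of_real s)"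
    using assms(2) unfolding rat_on_def by blast
  define f' where "f' s = poly (pderiv p * q - p * pderiv q) (of_real s) / poly (q * q) (of_real s)" for s
  have "rat_on I f'" unfolding rat_on_def f'_def
    by (rule exI[of _ "pderiv p * q - p * pderiv q"], rule exI[of _ "q*q"]) (use pq in auto)
  moreover have "(f has_vector_derivative f' s) (at s)" if s: "s \<in> I" for s
  proof -
    have "((\<lambda>z. poly p z / poly q z) has_field_derivative
        (poly (pderiv p) (of_real s) * poly q (of_real s) - poly p (of_real s) * poly (pderiv q) (of_real s))
          / (poly q (of_real s) * poly q (of_real s))) (at (of_real s))"
      using pq s by (intro DERIV_divide poly_DERIV) auto
    hence "((\<lambda>x. poly p (of_real x) / poly q (of_real x)) has_vector_derivative f' s) (at s)"
      unfolding f'_def by (intro has_vector_derivative_real_field) (simp add: algebra_simps)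
    thus ?thesis using has_vector_derivative_transform_within_open[OF _ assms(1) s, of _ _ f] pq by auto
  qed
  ultimately show ?thesis by blast
qed

lemma poly_zero_interval:
  fixes P :: "complex poly"
  assumes "a < b" "\<forall>s\<in>{a<..<b}. poly P (of_real s) = 0"
  shows "P = 0"
proof (rule ccontr)
  assume "P \<noteq> 0"
  hence "finite {z. poly P z = 0}" by (rule poly_roots_finite)
  moreover have "of_real ` {a<..<b} \<subseteq> {z. poly P z = 0}" using assms by auto
  ultimately have "finite (of_real ` {a<..<b} :: complex set)" by (rule finite_subset[rotated])
  moreover have "inj_on (of_real :: real \<Rightarrow> complex) {a<..<b}" by (auto simp: inj_on_def)
  ultimately have "finite {a<..<b}" using finite_image_iff by blast
  thus False using infinite_Ioo[OF assms(1)] by simp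
qed




lemma rat_deriv_formula:
  fixes f :: "real \<Rightarrow> complex" and p q :: "complex poly"
  assumes "open I" "s \<in> I" "\<forall>s\<in>I. poly q (of_real s) \<noteq> 0 \<and> f s = poly p (of_real s) / poly q (of_real s)"
  shows "(f has_vector_derivative (poly (pderiv p * q - p * pderiv q) (of_real s) / poly (q * q) (of_real s))) (at s)"
proof -
  have "((\<lambda>z. poly p z / poly q z) has_field_derivative
      (poly (pderiv p) (of_real s) * poly q (of_real s) - poly p (of_real s) * poly (pderiv q) (of_real s))
        / (poly q (of_real s) * poly q (of_real s))) (at (of_real s))"
    using assms by (intro DERIV_divide poly_DERIV) auto
  hence "((\<lambda>x. poly p (of_real x) / poly q (of_real x)) has_vector_derivative
      (poly (pderiv p * q - p * pderiv q) (of_real s) / poly (q * q) (of_real s))) (at s)"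
    by (intro has_vector_derivative_real_field) (simp add: algebra_simps)
  thus ?thesis using has_vector_derivative_transform_within_open[OF _ assms(1,2), of _ _ f] assms(3) by auto
qed

lemma keyA:
  assumes ab: "a < b" and S: "rat_on {a<..<b} S" and ph: "rat_on {a<..<b} \<phi>"
    and dS: "\<forall>s\<in>{a<..<b}. (S has_vector_derivative S' s) (at s)"
    and dph: "\<forall>s\<in>{a<..<b}. (\<phi> has_vector_derivative \<phi>' s) (at s)"
    and eq: "\<forall>s\<in>{a<..<b}. S' s + S s * \<phi>' s = 0"
  shows "(\<forall>s\<in>{a<..<b}. S s = 0) \<or> (\<forall>s\<in>{a<..<b}. \<phi>' s = 0)"
proof -
  let ?I = "{a<..<b}"
  obtain p q where pq: "\<forall>s\<in>?I. poly q (of_real s) \<noteq> 0 \<and> S s = poly p (of_real s) / poly q (of_real s)"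
    using S unfolding rat_on_def by blast
  obtain c d where cd: "\<forall>s\<in>?I. poly d (of_real s) \<noteq> 0 \<and> \<phi> s = poly c (of_real s) / poly d (of_real s)"
    using ph unfolding rat_on_def by blast
  define P1 where "P1 = pderiv p * q - p * pderiv q"
  define C1 where "C1 = pderiv c * d - c * pderiv d"
  have S'e: "S' s = poly P1 (of_real s) / poly (q * q) (of_real s)" if "s \<in> ?I" for s
    using vector_derivative_unique_at[OF rat_deriv_formula[OF _ that pq] dS[rule_format, OF that]]
    unfolding P1_def by simp
  have ph'e: "\<phi>' s = poly C1 (of_real s) / poly (d * d) (of_real s)" if "s \<in> ?I" for s
    using vector_derivative_unique_at[OF rat_deriv_formula[OF _ that cd] dph[rule_format, OF that]]
    unfolding C1_def by simp
  have "poly (P1 * (d * d) + p * q * C1) (of_real s) = 0" if s: "s \<in> ?I" for s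
  proof -
    let ?z = "complex_of_real s"
    have q0: "poly q ?z \<noteq> 0" and d0: "poly d ?z \<noteq> 0" using pq cd s by auto
    have e1: "S' s + S s * \<phi>' s = 0" using eq s by blast
    have e2: "S s = poly p ?z / poly q ?z" using pq s by blast
    have "poly P1 ?z / (poly q ?z * poly q ?z) + poly p ?z / poly q ?z * (poly C1 ?z / (poly d ?z * poly d ?z)) = 0"
      using e1 unfolding S'e[OF s] ph'e[OF s] e2 poly_mult .
    hence "(poly P1 ?z / (poly q ?z * poly q ?z) + poly p ?z / poly q ?z * (poly C1 ?z / (poly d ?z * poly d ?z)))
       * (poly q ?z * poly q ?z * (poly d ?z * poly d ?z)) = 0" by simp
    hence "poly P1 ?z * (poly d ?z * poly d ?z) + poly p ?z * poly q ?z * poly C1 ?z = 0"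
      using q0 d0 by (simp add: field_simps)
    thus ?thesis by simp
  qed
  hence "P1 * (d * d) + p * q * C1 = 0" using poly_zero_interval[OF ab] by blast
  hence eq2: "P1 * (d * d) = smult (-1) (p * q * C1)" by (simp add: eq_neg_iff_add_eq_0)
  obtain s0 where s0: "s0 \<in> ?I" using ab dense by auto
  have "q \<noteq> 0" "d \<noteq> 0" using pq cd s0 by auto
  from ALG[OF this eq2[unfolded P1_def C1_def]] have "p = 0 \<or> C1 = 0" unfolding C1_def by auto
  thus ?thesis
  proof
    assume "p = 0" thus ?thesis using pq by auto
  next
    assume "C1 = 0" thus ?thesis using ph'e by auto
  qed
qed

lemma indep1D:
  fixes R \<psi> :: "'k \<Rightarrow> real \<Rightarrow> complex"
  assumes "finite K" "card K = n" "a < b"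
    "\<forall>k\<in>K. rat_on {a<..<b} (R k) \<and> rat_on {a<..<b} (\<psi> k)"
    "\<forall>k\<in>K. \<forall>l\<in>K. k \<noteq> l \<longrightarrow> (\<forall>a' b' C. a \<le> a' \<longrightarrow> a' < b' \<longrightarrow> b' \<le> b \<longrightarrow> (\<exists>s\<in>{a'<..<b'}. \<psi> k s - \<psi> l s \<noteq> C))"
    "\<forall>s\<in>{a<..<b}. (\<Sum>k\<in>K. R k s * exp (\<psi> k s)) = 0"
  shows "\<forall>k\<in>K. \<forall>s\<in>{a<..<b}. R k s = 0"
  using assms
proof (induction n arbitrary: K a b R \<psi>)
  case 0
  thus ?case by simp
next
  case (Suc n)
  note fin = Suc.prems(1) and cardK = Suc.prems(2) and ab = Suc.prems(3) and rat = Suc.prems(4)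
    and ncst = Suc.prems(5) and sum0 = Suc.prems(6)
  show ?case
  proof (rule ccontr)
    assume "\<not> ?case"
    then obtain j s0 where j: "j \<in> K" and s0: "s0 \<in> {a<..<b}" and Rj0: "R j s0 \<noteq> 0" by blast
    obtain dR where "\<forall>s\<in>{a<..<b}. (R j has_vector_derivative dR s) (at s)"
      using rat_on_deriv[of "{a<..<b}" "R j"] rat j by auto
    hence cR: "continuous (at s0) (R j)" using s0 has_vector_derivative_continuous by blast
    obtain \<epsilon> where \<epsilon>: "\<epsilon> > 0" "\<forall>y. dist s0 y < \<epsilon> \<longrightarrow> R j y \<noteq> 0"
      using continuous_at_avoid[of s0 "R j" 0, OF cR Rj0] by blast
    define a' where "a' = max a (s0 - \<epsilon>)"
    define b' where "b' = min b (s0 + \<epsilon>)"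
    let ?J = "{a'<..<b'}"
    have a'b': "a' < b'" "a \<le> a'" "b' \<le> b" using s0 \<epsilon> unfolding a'_def b'_def by auto
    have s0J: "s0 \<in> ?J" using s0 \<epsilon> unfolding a'_def b'_def by auto
    have JI: "?J \<subseteq> {a<..<b}" using a'b' by auto
    have Rjnz: "\<forall>s\<in>?J. R j s \<noteq> 0"
    proof
      fix s assume "s \<in> ?J"
      hence "dist s0 s < \<epsilon>" unfolding a'_def b'_def dist_real_def by auto
      thus "R j s \<noteq> 0" using \<epsilon> by blast
    qed
    define S where "S k s = R k s / R j s" for k s
    define \<phi> where "\<phi> k s = \<psi> k s - \<psi> j s" for k s
    define K' where "K' = K - {j}"
    have finK': "finite K'" and cardK': "card K' = n" using fin cardK j unfolding K'_def by auto
    have ratS: "rat_on ?J (S k)" if "k \<in> K" for k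
      unfolding S_def using rat that j JI Rjnz by (intro rat_on_divide) (auto intro: rat_on_subset)
    have ratph: "rat_on ?J (\<phi> k)" if "k \<in> K" for k
      unfolding \<phi>_def using rat that j JI by (intro rat_on_diff) (auto intro: rat_on_subset)
    have "\<forall>k\<in>K'. \<exists>f'. rat_on ?J f' \<and> (\<forall>s\<in>?J. (S k has_vector_derivative f' s) (at s))"
      using rat_on_deriv[OF open_greaterThanLessThan ratS] unfolding K'_def by blast
    then obtain dS where dS: "\<forall>k\<in>K'. rat_on ?J (dS k) \<and> (\<forall>s\<in>?J. (S k has_vector_derivative dS k s) (at s))"
      by metis
    have "\<forall>k\<in>K'. \<exists>f'. rat_on ?J f' \<and> (\<forall>s\<in>?J. (\<phi> k has_vector_derivative f' s) (at s))"
      using rat_on_deriv[OF open_greaterThanLessThan ratph] unfolding K'_def by blast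
    then obtain dph where dph: "\<forall>k\<in>K'. rat_on ?J (dph k) \<and> (\<forall>s\<in>?J. (\<phi> k has_vector_derivative dph k s) (at s))"
      by metis
    define h where "h s = (\<Sum>k\<in>K'. S k s * exp (\<phi> k s))" for s
    have hval: "h s = -1" if s: "s \<in> ?J" for s
    proof -
      have e0: "(\<Sum>k\<in>K. R k s * exp (\<psi> k s)) = 0" using sum0 s JI by blast
      have nz: "R j s * exp (\<psi> j s) \<noteq> 0" using Rjnz s by simp
      have "(\<Sum>k\<in>K. S k s * exp (\<phi> k s)) = (\<Sum>k\<in>K. R k s * exp (\<psi> k s) / (R j s * exp (\<psi> j s)))"
        unfolding S_def \<phi>_def by (intro sum.cong refl) (simp add: exp_diff)
      also have "\<dots> = 0" unfolding sum_divide_distrib[symmetric] e0 by simp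
      finally have "(\<Sum>k\<in>K. S k s * exp (\<phi> k s)) = 0" .
      moreover have "(\<Sum>k\<in>K. S k s * exp (\<phi> k s)) = S j s * exp (\<phi> j s) + h s"
        unfolding h_def K'_def using fin j by (simp add: sum.remove)
      moreover have "S j s * exp (\<phi> j s) = 1" unfolding S_def \<phi>_def using Rjnz s by simp
      ultimately show ?thesis by (simp add: eq_neg_iff_add_eq_0 add.commute)
    qed
    define T where "T k s = dS k s + S k s * dph k s" for k s
    have Tsum: "(\<Sum>k\<in>K'. T k s * exp (\<phi> k s)) = 0" if s: "s \<in> ?J" for s
    proof -
      have "(h has_vector_derivative (\<Sum>k\<in>K'. S k s * (dph k s * exp (\<phi> k s)) + dS k s * exp (\<phi> k s))) (at s)"
        unfolding h_def
      proof (intro has_vector_derivative_sum has_vector_derivative_mult)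
        fix k assume k: "k \<in> K'"
        show "(S k has_vector_derivative dS k s) (at s)" using dS k s by blast
        have "((exp \<circ> \<phi> k) has_vector_derivative (dph k s * exp (\<phi> k s))) (at s)"
          using dph k s by (intro field_vector_diff_chain_at) (auto intro: DERIV_exp)
        thus "((\<lambda>x. exp (\<phi> k x)) has_vector_derivative (dph k s * exp (\<phi> k s))) (at s)"
          by (simp add: o_def)
      qed
      moreover have "(h has_vector_derivative 0) (at s)"
        using has_vector_derivative_transform_within_open[OF has_vector_derivative_const[of "-1::complex"]
            open_greaterThanLessThan s, of h] hval by auto
      ultimately have "(\<Sum>k\<in>K'. S k s * (dph k s * exp (\<phi> k s)) + dS k s * exp (\<phi> k s)) = 0"
        using vector_derivative_unique_at by blast
      thus ?thesis unfolding T_def by (simp add: algebra_simps)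
    qed
    have IH: "\<forall>k\<in>K'. \<forall>s\<in>?J. T k s = 0"
    proof (rule Suc.IH[OF finK' cardK' a'b'(1)])
      show "\<forall>k\<in>K'. rat_on ?J (T k) \<and> rat_on ?J (\<phi> k)"
        unfolding T_def using dS dph ratS ratph unfolding K'_def by (auto intro!: rat_on_add rat_on_mult)
      show "\<forall>k\<in>K'. \<forall>l\<in>K'. k \<noteq> l \<longrightarrow> (\<forall>a'' b'' C. a' \<le> a'' \<longrightarrow> a'' < b'' \<longrightarrow> b'' \<le> b' \<longrightarrow> (\<exists>s\<in>{a''<..<b''}. \<phi> k s - \<phi> l s \<noteq> C))"
      proof (intro ballI impI allI)
        fix k l a'' b'' C assume "k \<in> K'" "l \<in> K'" "k \<noteq> l" "a' \<le> a''" "a'' < b''" "b'' \<le> b'"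
        hence "\<exists>s\<in>{a''<..<b''}. \<psi> k s - \<psi> l s \<noteq> C" using ncst a'b' unfolding K'_def by auto
        thus "\<exists>s\<in>{a''<..<b''}. \<phi> k s - \<phi> l s \<noteq> C" unfolding \<phi>_def by simp
      qed
      show "\<forall>s\<in>?J. (\<Sum>k\<in>K'. T k s * exp (\<phi> k s)) = 0" using Tsum by blast
    qed
    have Rk0: "\<forall>s\<in>?J. R k s = 0" if k: "k \<in> K'" for k
    proof -
      have "(\<forall>s\<in>?J. S k s = 0) \<or> (\<forall>s\<in>?J. dph k s = 0)"
        using keyA[OF a'b'(1), of "S k" "\<phi> k" "dS k" "dph k"] ratS ratph dS dph IH k
        unfolding T_def K'_def by auto
      thus ?thesis
      proof
        assume "\<forall>s\<in>?J. S k s = 0"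
        thus ?thesis using Rjnz unfolding S_def by auto
      next
        assume d0: "\<forall>s\<in>?J. dph k s = 0"
        obtain C where C: "\<And>s. s \<in> ?J \<Longrightarrow> \<phi> k s = C"
        proof (rule has_vector_derivative_zero_constant[of ?J "\<phi> k"])
          show "convex ?J" by simp
          fix s assume "s \<in> ?J"
          thus "(\<phi> k has_vector_derivative 0) (at s within ?J)"
            using dph d0 k by (metis has_vector_derivative_at_within)
        qed blast
        have "k \<noteq> j" "k \<in> K" using k unfolding K'_def by auto
        then obtain s where "s \<in> ?J" "\<psi> k s - \<psi> j s \<noteq> C" using ncst j a'b' by blast
        thus ?thesis using C unfolding \<phi>_def by auto
      qed
    qed
    have "(\<Sum>k\<in>K. R k s0 * exp (\<psi> k s0)) = R j s0 * exp (\<psi> j s0) + (\<Sum>k\<in>K'. R k s0 * exp (\<psi> k s0))"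
      unfolding K'_def using fin j by (simp add: sum.remove)
    also have "(\<Sum>k\<in>K'. R k s0 * exp (\<psi> k s0)) = 0" using Rk0 s0J by simp
    finally have "R j s0 * exp (\<psi> j s0) = 0" using sum0 s0 by simp
    thus False using Rj0 by simp
  qed
qed




lemma poly_map_of_real: "poly (map_poly of_real p) (of_real x) = (of_real (poly p x) :: 'a::{real_algebra_1,field})"
  by (induction p) (auto simp: map_poly_pCons)

lemma polyfun_line:
  fixes f :: "'a::comm_ring_1 ^ 'i::finite \<Rightarrow> 'a"
  assumes "polyfun f"
  shows "\<exists>P. \<forall>z. f (a + z *s b) = poly P z"
proof -
  obtain E c where E: "finite E" "\<forall>x. f x = (\<Sum>\<alpha>\<in>E. c \<alpha> * (\<Prod>i\<in>UNIV. (x $ i) ^ (\<alpha> i)))"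
    using assms unfolding polyfun_def by blast
  define P where "P = (\<Sum>\<alpha>\<in>E. [:c \<alpha>:] * (\<Prod>i\<in>UNIV. [:a $ i, b $ i:] ^ (\<alpha> i)))"
  have "f (a + z *s b) = poly P z" for z
    using E(2) unfolding P_def by (simp add: poly_sum poly_prod algebra_simps)
  thus ?thesis by blast
qed

definition glp :: "(real^'n::finite \<Rightarrow> 'b::{real_algebra_1,field}) \<Rightarrow> bool" where
  "glp f \<longleftrightarrow> (\<forall>a b. \<exists>P. \<forall>s::real. f (a + s *\<^sub>R b) = poly P (of_real s))"

lemma glp_polyfun_real:
  fixes f :: "real^'n::finite \<Rightarrow> real"
  assumes "polyfun f" shows "glp f"
  unfolding glp_def
proof (intro allI)
  fix a b :: "real^'n"
  obtain P where "\<forall>z. f (a + z *s b) = poly P z" using polyfun_line[OF assms] by blast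
  hence "\<forall>s. f (a + s *\<^sub>R b) = poly P (of_real s)" by (simp add: scalar_mult_eq_scaleR)
  thus "\<exists>P. \<forall>s. f (a + s *\<^sub>R b) = poly P (of_real s)" by blast
qed

lemma cembed_line: "cembed (a + s *\<^sub>R b) = cembed a + of_real s *s cembed b"
  by (simp add: cembed_def vec_eq_iff)

lemma glp_polyfun_cembed:
  fixes f :: "complex^'n::finite \<Rightarrow> complex"
  assumes "polyfun f" shows "glp (\<lambda>y. f (cembed y))"
  unfolding glp_def cembed_line using polyfun_line[OF assms] by blast

lemma glp_const: "glp (\<lambda>x. c)"
  unfolding glp_def by (intro allI exI[of _ "[:c:]"]) simp

lemma glp_add: "glp f \<Longrightarrow> glp g \<Longrightarrow> glp (\<lambda>x. f x + g x)"
  unfolding glp_def by (metis poly_add)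

lemma glp_mult: "glp f \<Longrightarrow> glp g \<Longrightarrow> glp (\<lambda>x. f x * g x)"
  unfolding glp_def by (metis poly_mult)

lemma glp_diff: "glp f \<Longrightarrow> glp g \<Longrightarrow> glp (\<lambda>x. f x - g x)"
  unfolding glp_def by (metis poly_diff)

lemma glp_sum: "finite A \<Longrightarrow> (\<And>a. a \<in> A \<Longrightarrow> glp (F a)) \<Longrightarrow> glp (\<lambda>x. \<Sum>a\<in>A. F a x)"
  by (induction A rule: finite_induct) (auto intro: glp_add glp_const)

lemma glp_prod: "finite A \<Longrightarrow> (\<And>a. a \<in> A \<Longrightarrow> glp (F a)) \<Longrightarrow> glp (\<lambda>x. \<Prod>a\<in>A. F a x)"
  by (induction A rule: finite_induct) (auto intro: glp_mult glp_const)

lemma poly_zero_interval_gen: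
  fixes P :: "'b::{real_algebra_1,field} poly"
  assumes "a < b" "\<forall>s\<in>{a<..<b}. poly P (of_real s) = 0"
  shows "P = 0"
proof (rule ccontr)
  assume "P \<noteq> 0"
  hence "finite {z. poly P z = 0}" by (rule poly_roots_finite)
  moreover have "of_real ` {a<..<b} \<subseteq> {z. poly P z = 0}" using assms by auto
  ultimately have "finite (of_real ` {a<..<b} :: 'b set)" by (rule finite_subset[rotated])
  moreover have "inj_on (of_real :: real \<Rightarrow> 'b) {a<..<b}" by (auto simp: inj_on_def)
  ultimately have "finite {a<..<b}" using finite_image_iff by blast
  thus False using infinite_Ioo[OF assms(1)] by simp
qed

lemma glp_zero:
  fixes f :: "real^'n::finite \<Rightarrow> 'b::{real_algebra_1,field}"
  assumes "glp f" "open S" "y0 \<in> S" "\<forall>y\<in>S. f y = 0"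
  shows "f x = 0"
proof -
  obtain e where e: "e > 0" "ball y0 e \<subseteq> S" using assms(2,3) open_contains_ball by blast
  obtain P where P: "\<forall>s. f (y0 + s *\<^sub>R (x - y0)) = poly P (of_real s)"
    using assms(1) unfolding glp_def by blast
  define \<delta> where "\<delta> = e / (norm (x - y0) + 1)"
  have np: "norm (x - y0) + 1 > 0" by (metis norm_ge_zero add_nonneg_pos zero_less_one)
  have \<delta>: "\<delta> > 0" unfolding \<delta>_def using e np by simp
  have "\<forall>s\<in>{0<..<\<delta>}. poly P (of_real s) = 0"
  proof
    fix s assume s: "s \<in> {0<..<\<delta>}"
    have "norm (s *\<^sub>R (x - y0)) = s * norm (x - y0)" using s by simp
    also have "\<dots> \<le> s * (norm (x - y0) + 1)" using s by simp
    also have "\<dots> < \<delta> * (norm (x - y0) + 1)" using s np by (intro mult_strict_right_mono) auto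
    also have "\<dots> = e" unfolding \<delta>_def using np by simp
    finally have "y0 + s *\<^sub>R (x - y0) \<in> ball y0 e" by (simp add: dist_norm)
    thus "poly P (of_real s) = 0" using P e assms(4) by (metis subsetD)
  qed
  hence "P = 0" using poly_zero_interval_gen[OF \<delta>] by blast
  thus ?thesis using P[rule_format, of 1] by simp
qed

lemma glp_domain:
  fixes f g :: "real^'n::finite \<Rightarrow> 'b::{real_algebra_1,field}"
  assumes "glp f" "glp g" "\<forall>x. f x * g x = 0"
  shows "(\<forall>x. f x = 0) \<or> (\<forall>x. g x = 0)"
proof (rule ccontr)
  assume "\<not> ?thesis"
  then obtain a b where a: "f a \<noteq> 0" and b: "g b \<noteq> 0" by blast
  obtain P where P: "\<forall>s. f (a + s *\<^sub>R (b - a)) = poly P (of_real s)" using assms(1) unfolding glp_def by blast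
  obtain Q where Q: "\<forall>s. g (a + s *\<^sub>R (b - a)) = poly Q (of_real s)" using assms(2) unfolding glp_def by blast
  have "P \<noteq> 0" using P[rule_format, of 0] a by auto
  moreover have "Q \<noteq> 0" using Q[rule_format, of 1] b by auto
  moreover have "\<forall>s\<in>{0<..<1}. poly (P * Q) (of_real s) = 0" using P Q assms(3) by (metis poly_mult)
  hence "P * Q = 0" by (metis poly_zero_interval_gen zero_less_one)
  ultimately show False by simp
qed

lemma glp_prod_nonzero:
  fixes F :: "'a \<Rightarrow> real^'n::finite \<Rightarrow> 'b::{real_algebra_1,field}"
  assumes "finite A" "\<forall>a\<in>A. glp (F a) \<and> (\<exists>x. F a x \<noteq> 0)"
  shows "\<exists>x. (\<Prod>a\<in>A. F a x) \<noteq> 0"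
  using assms
proof (induction A rule: finite_induct)
  case empty thus ?case by simp
next
  case (insert a A)
  have g1: "glp (F a)" and n1: "\<exists>x. F a x \<noteq> 0" using insert by auto
  have g2: "glp (\<lambda>x. \<Prod>a\<in>A. F a x)" using insert by (intro glp_prod) auto
  have n2: "\<exists>x. (\<Prod>a\<in>A. F a x) \<noteq> 0" using insert by auto
  have "\<not> (\<forall>x. F a x * (\<Prod>a\<in>A. F a x) = 0)" using glp_domain[OF g1 g2] n1 n2 by blast
  thus ?case using insert by auto
qed

lemma polyfun_real_to_complex:
  fixes f :: "complex^'n::finite \<Rightarrow> complex"
  assumes "polyfun f" "\<forall>y. f (cembed y) = 0"
  shows "f x = 0"
proof -
  define a where "a = (\<chi> i. Re (x $ i))"
  define b where "b = (\<chi> i. Im (x $ i))"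
  obtain P where P: "\<forall>z. f (cembed a + z *s cembed b) = poly P z" using polyfun_line[OF assms(1)] by blast
  have "\<forall>s\<in>{0<..<1}. poly P (of_real s) = 0"
    using P assms(2) cembed_line by metis
  hence "P = 0" using poly_zero_interval_gen[of 0 1] by simp
  moreover have "x = cembed a + \<i> *s cembed b"
    by (simp add: vec_eq_iff a_def b_def cembed_def complex_eq_iff)
  ultimately show ?thesis using P by simp
qed




lemma rat_on_polyfun:
  fixes f :: "complex^'n::finite \<Rightarrow> complex"
  assumes "polyfun f" "\<forall>j. rat_on I (\<lambda>s. X s $ j)"
  shows "rat_on I (\<lambda>s. f (X s))"
proof -
  obtain E c where E: "finite E" "\<forall>x. f x = (\<Sum>\<alpha>\<in>E. c \<alpha> * (\<Prod>i\<in>UNIV. (x $ i) ^ (\<alpha> i)))"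
    using assms(1) unfolding polyfun_def by blast
  have "rat_on I (\<lambda>s. \<Sum>\<alpha>\<in>E. c \<alpha> * (\<Prod>i\<in>UNIV. (X s $ i) ^ (\<alpha> i)))"
    using assms(2) E(1) by (intro rat_on_sum rat_on_mult rat_on_const rat_on_prod rat_on_power) auto
  thus ?thesis by (rule rat_on_cong) (simp add: E(2))
qed

lemma rdot_cembed: "rdot v (cembed y) = complex_of_real (inner v y)"
  by (simp add: rdot_def cembed_def inner_vec_def)

lemma inner_rat:
  fixes Pp Qq :: "'j::finite \<Rightarrow> 'x \<Rightarrow> real" and a y :: "real^'j"
  assumes "\<forall>j. Qq j t \<noteq> 0 \<and> y $ j = Pp j t / Qq j t"
  shows "inner a y = (\<Sum>j\<in>UNIV. a $ j * (Pp j t * (\<Prod>i\<in>UNIV-{j}. Qq i t))) / (\<Prod>j\<in>UNIV. Qq j t)"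
proof -
  have Q: "(\<Prod>j\<in>UNIV. Qq j t) \<noteq> 0" using assms by simp
  have "inner a y = (\<Sum>j\<in>UNIV. a $ j * (Pp j t / Qq j t))" using assms by (simp add: inner_vec_def)
  also have "\<dots> = (\<Sum>j\<in>UNIV. a $ j * (Pp j t * (\<Prod>i\<in>UNIV-{j}. Qq i t)) / (\<Prod>j\<in>UNIV. Qq j t))"
  proof (intro sum.cong refl)
    fix j :: 'j
    have "(\<Prod>j\<in>UNIV. Qq j t) = Qq j t * (\<Prod>i\<in>UNIV-{j}. Qq i t)" by (simp add: prod.remove)
    moreover have "(\<Prod>i\<in>UNIV-{j}. Qq i t) \<noteq> 0" using assms by simp
    ultimately show "a $ j * (Pp j t / Qq j t) = a $ j * (Pp j t * (\<Prod>i\<in>UNIV-{j}. Qq i t)) / (\<Prod>j\<in>UNIV. Qq j t)"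
      using assms by (simp add: field_simps)
  qed
  also have "\<dots> = (\<Sum>j\<in>UNIV. a $ j * (Pp j t * (\<Prod>i\<in>UNIV-{j}. Qq i t))) / (\<Prod>j\<in>UNIV. Qq j t)"
    by (simp add: sum_divide_distrib)
  finally show ?thesis .
qed

lemma stepC:
  fixes \<sigma> :: "real^'m::finite \<Rightarrow> real^('m option)"
    and D U :: "(real^'m) set"
    and m :: nat and v :: "nat \<Rightarrow> real^('m option)"
    and Pn Pd :: "nat \<Rightarrow> complex^('m option) \<Rightarrow> complex"
  assumes rp: "rp_param \<sigma> D" and oU: "open U" and UD: "U \<subseteq> D"
    and hyp: "hyperplane_condition \<sigma> U" and inj: "inj_on v {..<m}"
    and pf: "\<forall>k<m. polyfun (Pn k) \<and> polyfun (Pd k)"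
    and van: "\<forall>t\<in>U. E_defined m Pd (cembed (\<sigma> t)) \<and> E_fun m v Pn Pd (cembed (\<sigma> t)) = 0"
    and t1: "t1 \<in> U" and k: "k < m"
  shows "Pn k (cembed (\<sigma> t1)) = 0"
proof -
  obtain Pp Qq where PQ: "\<forall>j. polyfun (Pp j) \<and> polyfun (Qq j) \<and> (\<forall>t\<in>D. Qq j t \<noteq> 0 \<and> \<sigma> t $ j = Pp j t / Qq j t)"
    using rp unfolding rp_param_def by metis
  obtain r where r: "r > 0" "ball t1 r \<subseteq> U" using oU t1 open_contains_ball by blast
  define Qall where "Qall t = (\<Prod>j\<in>UNIV. Qq j t)" for t
  define N where "N a t = (\<Sum>j\<in>UNIV. a $ j * (Pp j t * (\<Prod>i\<in>UNIV-{j}. Qq i t)))" for a :: "real^('m option)" and t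
  have NQ: "inner a (\<sigma> t) = N a t / Qall t" if "t \<in> D" for a t
    unfolding N_def Qall_def by (rule inner_rat) (use PQ that in auto)
  have Qnz: "Qall t \<noteq> 0" if "t \<in> D" for t unfolding Qall_def using PQ that by simp
  have glpQ: "glp Qall" unfolding Qall_def using PQ by (intro glp_prod glp_polyfun_real) auto
  have glpN: "glp (N a)" for a unfolding N_def using PQ
    by (intro glp_sum glp_mult glp_const glp_prod glp_polyfun_real) auto
  define A where "A = (\<lambda>(k,l). v k - v l) ` {(k,l). k<m \<and> l<m \<and> k\<noteq>l}"
  have finA: "finite A" unfolding A_def by (rule finite_imageI) (rule finite_subset[of _ "{..<m} \<times> {..<m}"], auto)
  define F where "F t = (\<Prod>a\<in>A. N a t - inner a (\<sigma> t1) * Qall t)" for t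
  have "\<exists>x. F x \<noteq> 0" unfolding F_def
  proof (rule glp_prod_nonzero[OF finA], intro ballI conjI)
    fix a assume a: "a \<in> A"
    show "glp (\<lambda>t. N a t - inner a (\<sigma> t1) * Qall t)" using glpN glpQ by (intro glp_diff glp_mult glp_const)
    have "a \<noteq> 0" using a inj unfolding A_def inj_on_def by auto
    hence "\<not> \<sigma> ` U \<subseteq> {y. inner a y = inner a (\<sigma> t1)}" using hyp unfolding hyperplane_condition_def by blast
    then obtain t where t: "t \<in> U" "inner a (\<sigma> t) \<noteq> inner a (\<sigma> t1)" by blast
    have tD: "t \<in> D" using t UD by auto
    have "N a t - inner a (\<sigma> t1) * Qall t = Qall t * (inner a (\<sigma> t) - inner a (\<sigma> t1))"
      using NQ[OF tD, of a] Qnz[OF tD] by (simp add: field_simps)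
    also have "\<dots> \<noteq> 0" using t Qnz[OF tD] by simp
    finally show "\<exists>x. N a x - inner a (\<sigma> t1) * Qall x \<noteq> 0" by blast
  qed
  moreover have glpF: "glp F" unfolding F_def using glpN glpQ finA
    by (intro glp_prod glp_diff glp_mult glp_const) auto
  ultimately have "\<not> (\<forall>y\<in>ball t1 (r/2). F y = 0)"
    using glp_zero[of F "ball t1 (r/2)" t1] glpF r by (metis open_ball centre_in_ball half_gt_zero)
  then obtain t' where t': "t' \<in> ball t1 (r/2)" "F t' \<noteq> 0" by blast
  have t'U: "t' \<in> U" using t' r by auto
  have sep: "inner a (\<sigma> t') \<noteq> inner a (\<sigma> t1)" if a: "a \<in> A" for a
  proof
    assume eq: "inner a (\<sigma> t') = inner a (\<sigma> t1)"
    have "N a t' - inner a (\<sigma> t1) * Qall t' = 0"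
      using NQ[of t' a] eq Qnz[of t'] t'U UD by (auto simp: field_simps)
    hence "F t' = 0" unfolding F_def using finA a by (metis prod_zero_iff)
    thus False using t' by simp
  qed
  define L where "L s = t1 + s *\<^sub>R (t' - t1)" for s :: real
  define I where "I = {-1<..<(2::real)}"
  have LU: "L s \<in> U" if "s \<in> I" for s
  proof -
    have "dist t1 (L s) = \<bar>s\<bar> * dist t1 t'" unfolding L_def by (simp add: dist_norm norm_minus_commute)
    also have "\<dots> < 2 * (r/2)"
    proof -
      have "\<bar>s\<bar> < 2" using that unfolding I_def by auto
      moreover have "dist t1 t' < r/2" using t' by simp
      ultimately show ?thesis by (intro mult_strict_mono') auto
    qed
    finally show ?thesis using r by auto
  qed
  have LD: "L s \<in> D" if "s \<in> I" for s using LU[OF that] UD by auto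
  define X where "X s = cembed (\<sigma> (L s))" for s
  have ratX: "\<forall>j. rat_on I (\<lambda>s. X s $ j)"
  proof
    fix j
    obtain P1 where P1: "\<forall>s. Pp j (t1 + s *\<^sub>R (t' - t1)) = poly P1 (of_real s)"
      using glp_polyfun_real[of "Pp j"] PQ unfolding glp_def by blast
    obtain Q1 where Q1: "\<forall>s. Qq j (t1 + s *\<^sub>R (t' - t1)) = poly Q1 (of_real s)"
      using glp_polyfun_real[of "Qq j"] PQ unfolding glp_def by blast
    have q: "Qq j (L s) \<noteq> 0" "\<sigma> (L s) $ j = Pp j (L s) / Qq j (L s)" if s: "s \<in> I" for s
      using PQ LD[OF s] by auto
    have "rat_on I (\<lambda>s. poly (map_poly complex_of_real P1) (of_real s) / poly (map_poly complex_of_real Q1) (of_real s))"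
    proof (intro rat_on_divide rat_on_poly ballI)
      fix s assume s: "s \<in> I"
      show "poly (map_poly complex_of_real Q1) (complex_of_real s) \<noteq> 0"
        using q[OF s] Q1 unfolding L_def poly_map_of_real by simp
    qed
    thus "rat_on I (\<lambda>s. X s $ j)"
    proof (rule rat_on_cong)
      fix s assume s: "s \<in> I"
      show "poly (map_poly complex_of_real P1) (complex_of_real s) / poly (map_poly complex_of_real Q1) (complex_of_real s) = X s $ j"
        using q[OF s] P1 Q1 unfolding L_def X_def poly_map_of_real cembed_def by simp
    qed
  qed
  define R where "R k s = Pn k (X s) / Pd k (X s)" for k s
  define \<psi> where "\<psi> k s = - \<i> * rdot (v k) (X s)" for k s
  have Pdnz: "Pd k (X s) \<noteq> 0" if "s \<in> I" "k < m" for k s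
    using van LU[OF that(1)] that(2) unfolding E_defined_def X_def by blast
  have ratR: "rat_on I (R k)" if "k < m" for k
    unfolding R_def using pf that Pdnz
    by (intro rat_on_divide rat_on_polyfun ratX) auto
  have ratpsi: "rat_on I (\<psi> k)" for k
    unfolding \<psi>_def rdot_def using ratX
    by (intro rat_on_mult rat_on_const rat_on_sum) auto
  have psidiff: "\<psi> k s - \<psi> l s = - \<i> * complex_of_real (inner (v k - v l) (\<sigma> (L s)))" for k l s
    unfolding \<psi>_def X_def rdot_cembed by (simp add: inner_diff_left algebra_simps)
  have ncst: "\<forall>k\<in>{..<m}. \<forall>l\<in>{..<m}. k \<noteq> l \<longrightarrow> (\<forall>a' b' C. -1 \<le> a' \<longrightarrow> a' < b' \<longrightarrow> b' \<le> 2 \<longrightarrow> (\<exists>s\<in>{a'<..<b'}. \<psi> k s - \<psi> l s \<noteq> C))"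
  proof (intro ballI impI allI, rule ccontr)
    fix k l a' b' C
    assume kl: "k \<in> {..<m}" "l \<in> {..<m}" "k \<noteq> l" and ab: "-1 \<le> a'" "a' < b'" "b' \<le> 2"
      and H: "\<not> (\<exists>s\<in>{a'<..<b'}. \<psi> k s - \<psi> l s \<noteq> C)"
    define a where "a = v k - v l"
    have aA: "a \<in> A" unfolding a_def A_def using kl by auto
    define c0 where "c0 = Re (\<i> * C)"
    have gc: "inner a (\<sigma> (L s)) = c0" if s: "s \<in> {a'<..<b'}" for s
    proof -
      have "- \<i> * complex_of_real (inner a (\<sigma> (L s))) = C" using H s psidiff unfolding a_def by auto
      hence "complex_of_real (inner a (\<sigma> (L s))) = \<i> * C" by (metis minus_mult_minus mult.assoc mult_minus_left complex_i_mult_minus mult_1)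
      thus ?thesis unfolding c0_def by (metis Re_complex_of_real)
    qed
    obtain NP where NP: "\<forall>s. N a (t1 + s *\<^sub>R (t' - t1)) = poly NP (of_real s)" using glpN unfolding glp_def by blast
    obtain QP where QP: "\<forall>s. Qall (t1 + s *\<^sub>R (t' - t1)) = poly QP (of_real s)" using glpQ unfolding glp_def by blast
    have gNQ: "inner a (\<sigma> (L s)) = poly NP s / poly QP s" "poly QP s \<noteq> 0" if "s \<in> I" for s
      using NQ[OF LD[OF that], of a] Qnz[OF LD[OF that]] NP QP unfolding L_def by auto
    have "\<forall>s\<in>{a'<..<b'}. poly (NP - smult c0 QP) (of_real s) = 0"
    proof
      fix s assume s: "s \<in> {a'<..<b'}"
      hence sI: "s \<in> I" using ab unfolding I_def by auto
      show "poly (NP - smult c0 QP) (of_real s) = 0" using gc[OF s] gNQ[OF sI] by (simp add: field_simps)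
    qed
    hence Z: "NP - smult c0 QP = 0" using poly_zero_interval_gen[OF ab(2)] by blast
    have "inner a (\<sigma> (L s)) = c0" if "s \<in> I" for s
    proof -
      have "poly NP s = c0 * poly QP s" using Z by (metis diff_eq_eq add_0 poly_smult poly_diff poly_0 diff_zero eq_iff_diff_eq_0)
      thus ?thesis using gNQ[OF that] by simp
    qed
    from this[of 0] this[of 1] have "inner a (\<sigma> t') = inner a (\<sigma> t1)" unfolding L_def I_def by simp
    thus False using sep[OF aA] by simp
  qed
  have sum0: "\<forall>s\<in>{-1<..<2}. (\<Sum>k\<in>{..<m}. R k s * exp (\<psi> k s)) = 0"
    using van LU unfolding E_fun_def R_def \<psi>_def X_def I_def by auto
  have "\<forall>k\<in>{..<m}. \<forall>s\<in>{-1<..<2}. R k s = 0"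
    by (rule indep1D[OF finite_lessThan refl _ _ ncst sum0]) (use ratR ratpsi I_def in auto)
  hence "R k 0 = 0" using k by auto
  moreover have "Pd k (X 0) \<noteq> 0" using Pdnz[of 0 k] k unfolding I_def by auto
  ultimately show ?thesis unfolding R_def X_def L_def by simp
qed




lemma cembed_scale: "cembed (c *\<^sub>R y) = c *\<^sub>R cembed y"
  by (simp add: cembed_def vec_eq_iff of_real_def)

theorem theorem5:
  fixes \<sigma> :: "real^'m::finite \<Rightarrow> real^('m option)"
    and D U :: "(real^'m) set"
    and d :: int and m :: nat and v :: "nat \<Rightarrow> real^('m option)"
    and Pn Pd :: "nat \<Rightarrow> complex^('m option) \<Rightarrow> complex"
  assumes "rp_param \<sigma> D"
    and "open U" and "U \<subseteq> D" and "\<forall>t\<in>U. \<sigma> t $ None \<noteq> 0"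
    and "hyperplane_condition \<sigma> U"
    and "inner_point_condition \<sigma> U"
    and "is_E_function d m v Pn Pd"
    and "\<forall>t\<in>U. E_defined m Pd (cembed (\<sigma> t)) \<and> E_fun m v Pn Pd (cembed (\<sigma> t)) = 0"
  shows "\<forall>x. E_defined m Pd x \<longrightarrow> E_fun m v Pn Pd x = 0"
proof -
  note rp = assms(1) and oU = assms(2) and UD = assms(3) and s1 = assms(4) and hyp = assms(5)
    and inn = assms(6) and isE = assms(7) and van = assms(8)
  have injv: "inj_on v {..<m}" and pf: "\<forall>k<m. polyfun (Pn k) \<and> polyfun (Pd k)"
    and Pdex: "\<forall>k<m. \<exists>x. Pd k x \<noteq> 0"
    and hom: "\<forall>k<m. \<forall>x (c::real). c \<noteq> 0 \<and> Pd k x \<noteq> 0 \<and> Pd k (c *\<^sub>R x) \<noteq> 0 \<longrightarrow>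
            Pn k (c *\<^sub>R x) / Pd k (c *\<^sub>R x) = complex_of_real c powi d * (Pn k x / Pd k x)"
    using isE unfolding is_E_function_def by auto
  have C: "Pn k (cembed (\<sigma> t)) = 0" if "k < m" "t \<in> U" for k t
    by (rule stepC[OF rp oU UD hyp injv pf van that(2,1)])
  obtain t0 \<epsilon> where t0: "t0 \<in> U" and \<epsilon>: "\<epsilon> > 0" "ball (sigma_hat \<sigma> t0) \<epsilon> \<subseteq> sigma_hat \<sigma> ` U"
    using inn unfolding inner_point_condition_def mem_interior by blast
  define g where "g y = (\<chi> i. y $ Some i / y $ None)" for y :: "real^('m option)"
  define Cn where "Cn = {y. y $ None > 0} \<inter> g -` ball (sigma_hat \<sigma> t0) \<epsilon>"
  have oCn: "open Cn" unfolding Cn_def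
  proof (rule continuous_open_preimage)
    show "continuous_on {y. y $ None > 0} g" unfolding g_def
      by (intro continuous_on_vec_lambda continuous_intros) auto
    show "open {y :: real^('m option). y $ None > 0}"
      by (rule open_Collect_less) (intro continuous_intros)+
  qed simp
  define y0 where "y0 = (\<chi> j. case j of None \<Rightarrow> 1 | Some i \<Rightarrow> sigma_hat \<sigma> t0 $ i)"
  have y0: "y0 \<in> Cn" unfolding Cn_def y0_def g_def using \<epsilon> by (simp add: vec_eq_iff)
  have Pn0: "Pn k x = 0" if k: "k < m" for k x
  proof -
    have cone: "Pn k (cembed y) * Pd k (cembed y) = 0" if y: "y \<in> Cn" for y
    proof (cases "Pd k (cembed y) = 0")
      case False
      have "g y \<in> sigma_hat \<sigma> ` U" using y \<epsilon> unfolding Cn_def by auto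
      then obtain t where t: "t \<in> U" "g y = sigma_hat \<sigma> t" by blast
      have st: "\<sigma> t $ None \<noteq> 0" using s1 t by auto
      have yN: "y $ None > 0" using y unfolding Cn_def by auto
      define c where "c = y $ None / \<sigma> t $ None"
      have c0: "c \<noteq> 0" unfolding c_def using st yN by simp
      have yc: "y = c *\<^sub>R \<sigma> t"
      proof (subst vec_eq_iff, rule allI)
        fix j :: "'m option"
        show "y $ j = (c *\<^sub>R \<sigma> t) $ j"
        proof (cases j)
          case None thus ?thesis unfolding c_def using st by simp
        next
          case (Some i)
          have "y $ Some i / y $ None = \<sigma> t $ Some i / \<sigma> t $ None"
            using t(2) unfolding g_def sigma_hat_def vec_eq_iff by auto
          thus ?thesis unfolding c_def using Some st yN by (simp add: field_simps)
        qed
      qed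
      have Pdx: "Pd k (cembed (\<sigma> t)) \<noteq> 0" using van t k unfolding E_defined_def by blast
      have e: "cembed y = c *\<^sub>R cembed (\<sigma> t)" unfolding yc cembed_scale ..
      have "Pn k (cembed y) / Pd k (cembed y) = complex_of_real c powi d * (Pn k (cembed (\<sigma> t)) / Pd k (cembed (\<sigma> t)))"
        unfolding e using hom k c0 Pdx False e by auto
      also have "\<dots> = 0" using C[OF k t(1)] by simp
      finally show ?thesis using False by simp
    qed simp
    have glpG: "glp (\<lambda>y. Pn k (cembed y) * Pd k (cembed y))"
      using pf k by (intro glp_mult glp_polyfun_cembed) auto
    have "\<forall>y. Pn k (cembed y) * Pd k (cembed y) = 0"
      using glp_zero[OF glpG oCn y0] cone by blast
    hence "(\<forall>y. Pn k (cembed y) = 0) \<or> (\<forall>y. Pd k (cembed y) = 0)"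
      using glp_domain[of "\<lambda>y. Pn k (cembed y)" "\<lambda>y. Pd k (cembed y)"] pf k
      by (auto intro: glp_polyfun_cembed)
    moreover have "\<not> (\<forall>y. Pd k (cembed y) = 0)"
      using polyfun_real_to_complex[of "Pd k"] pf Pdex k by blast
    ultimately have "\<forall>y. Pn k (cembed y) = 0" by blast
    thus ?thesis using polyfun_real_to_complex[of "Pn k"] pf k by blast
  qed
  show ?thesis unfolding E_fun_def using Pn0 by simp
qed


end
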